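(* Let $(\xi,\eta)\in\mathbb{R}^2$ be such that $1,\xi,\eta$ are linearly independent over $\mathbb{Q}$, $f(\xi,\eta)=0$ for some irreducible $f\in\mathbb{Q}[x,y]$ of degree $2$ with $f\notin\mathbb{Q}[x]$, and there is $\lambda>1/2$ such that for every sufficiently large $X\ge1$ the system $|x_0|\le X$, $|x_0\xi-x_1|\le X^{-\lambda}$, $|x_0\eta-x_2|\le X^{-\lambda}$ has a non-zero solution in $\mathbb{Z}^3$. Let $(\mathbf{x}_i)_{i\ge1}$ be a sequence of minimal points for $(\xi,\eta)$, $W_i=\langle\mathbf{x}_i,\mathbf{x}_{i+1}\rangle_{\mathbb{Q}}$, and $H(W_i)=\|\mathbf{x}_i\wedge\mathbf{x}_{i+1}\|_2$. Let $I$ be the set of indices $i\ge2$ such that $\mathbf{x}_{i-1},\mathbf{x}_i,\mathbf{x}_{i+1}$ are linearly independent over $\mathbb{Q}$. Then $I$ is infinite, and for any pair of consecutive elements $i<j$ of $I$ we have $W_i\neq W_j$ and $X_j\le H(W_i)H(W_j)$.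
   Context: For $\mathbf{x}=(x_0,x_1,x_2)\in\mathbb{Z}^3$ put $\delta(\mathbf{x})=\max\{|x_0\xi-x_1|,|x_0\eta-x_2|\}$. For $X\ge1$, $\Delta(X)$ is the minimum of $\delta(\mathbf{x})$ over all $\mathbf{x}\in\mathbb{Z}^3$ with $1\le x_0\le X$. Let $X_1=1<X_2<X_3<\cdots$ be the number $1$ together with the points of discontinuity of $\Delta$, in increasing order, and $\Delta_i=\Delta(X_i)$. A sequence of minimal points is a choice, for each $i\ge1$, of $\mathbf{x}_i=(x_{i,0},x_{i,1},x_{i,2})\in\mathbb{Z}^3$ with $x_{i,0}=X_i$ and $\delta(\mathbf{x}_i)=\Delta_i$. $\wedge$ denotes the cross product in $\mathbb{R}^3$ and $\|\cdot\|_2$ the Euclidean norm; consecutive elements of $I$ are taken in the natural order of $\mathbb{N}$. *)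

theory Defs
  imports "HOL-Analysis.Analysis" "HOL-Analysis.Cross3"
    "HOL-Computational_Algebra.Polynomial" "HOL-Computational_Algebra.Factorial_Ring"
begin

type_synonym ipt = "int \<times> int \<times> int"

(* Bivariate polynomials Q[x,y] are represented as rat poly poly = (Q[x])[y]:
   the outer variable is y, the coefficients are polynomials in x. *)

definition eval2 :: "rat poly poly \<Rightarrow> real \<Rightarrow> real \<Rightarrow> real" where
  "eval2 f x y = poly (map_poly (\<lambda>p. poly (map_poly of_rat p) x) f) y"

(* total degree of a bivariate polynomial (coefficient of x^k y^i is coeff (coeff f i) k) *)
definition total_degree :: "rat poly poly \<Rightarrow> nat" where
  "total_degree f = Max {i + degree (coeff f i) | i. coeff f i \<noteq> 0}"

definition delta :: "real \<Rightarrow> real \<Rightarrow> ipt \<Rightarrow> real" where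
  "delta \<xi> \<eta> x = (case x of (x0, x1, x2) \<Rightarrow>
      max \<bar>real_of_int x0 * \<xi> - real_of_int x1\<bar> \<bar>real_of_int x0 * \<eta> - real_of_int x2\<bar>)"

definition Delta :: "real \<Rightarrow> real \<Rightarrow> real \<Rightarrow> real" where
  "Delta \<xi> \<eta> X = Inf {delta \<xi> \<eta> x | x. 1 \<le> fst x \<and> real_of_int (fst x) \<le> X}"

definition disc_points :: "real \<Rightarrow> real \<Rightarrow> real set" where
  "disc_points \<xi> \<eta> = insert 1 {t. t > 1 \<and> \<not> isCont (Delta \<xi> \<eta>) t}"

(* X_i : the i-th element (i >= 1) of disc_points in increasing order *)
definition Xseq :: "real \<Rightarrow> real \<Rightarrow> nat \<Rightarrow> real" where
  "Xseq \<xi> \<eta> i = (THE t. t \<in> disc_points \<xi> \<eta> \<and>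
      finite {s \<in> disc_points \<xi> \<eta>. s < t} \<and> card {s \<in> disc_points \<xi> \<eta>. s < t} = i - 1)"

definition minimal_points :: "real \<Rightarrow> real \<Rightarrow> (nat \<Rightarrow> ipt) \<Rightarrow> bool" where
  "minimal_points \<xi> \<eta> x \<longleftrightarrow> (\<forall>i\<ge>1. real_of_int (fst (x i)) = Xseq \<xi> \<eta> i \<and>
      delta \<xi> \<eta> (x i) = Delta \<xi> \<eta> (Xseq \<xi> \<eta> i))"

definition to_rat3 :: "ipt \<Rightarrow> rat \<times> rat \<times> rat" where
  "to_rat3 x = (case x of (a, b, c) \<Rightarrow> (of_int a, of_int b, of_int c))"

definition to_real3 :: "ipt \<Rightarrow> real^3" where
  "to_real3 x = (case x of (a, b, c) \<Rightarrow> vector [of_int a, of_int b, of_int c])"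

definition smul3 :: "rat \<Rightarrow> rat \<times> rat \<times> rat \<Rightarrow> rat \<times> rat \<times> rat" where
  "smul3 r v = (case v of (a, b, c) \<Rightarrow> (r * a, r * b, r * c))"

definition add3 :: "rat \<times> rat \<times> rat \<Rightarrow> rat \<times> rat \<times> rat \<Rightarrow> rat \<times> rat \<times> rat" where
  "add3 u v = (case u of (a, b, c) \<Rightarrow> case v of (a', b', c') \<Rightarrow> (a + a', b + b', c + c'))"

definition qspan2 :: "ipt \<Rightarrow> ipt \<Rightarrow> (rat \<times> rat \<times> rat) set" where
  "qspan2 u v = {add3 (smul3 a (to_rat3 u)) (smul3 b (to_rat3 v)) | a b. True}"

definition qlin_indep3 :: "ipt \<Rightarrow> ipt \<Rightarrow> ipt \<Rightarrow> bool" where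
  "qlin_indep3 u v w \<longleftrightarrow> (\<forall>a b c :: rat.
      add3 (add3 (smul3 a (to_rat3 u)) (smul3 b (to_rat3 v))) (smul3 c (to_rat3 w)) = (0, 0, 0)
      \<longrightarrow> a = 0 \<and> b = 0 \<and> c = 0)"

definition Hgt :: "ipt \<Rightarrow> ipt \<Rightarrow> real" where
  "Hgt u v = norm (cross3 (to_real3 u) (to_real3 v))"

end

theory Submission
  imports Defs
begin

unbundle cross3_syntax

definition rtr :: "rat \<times> rat \<times> rat \<Rightarrow> real^3" where
  "rtr p = (case p of (a,b,c) \<Rightarrow> vector [of_rat a, of_rat b, of_rat c])"

lemma rtr_add: "rtr (add3 p q) = rtr p + rtr q"
  by (cases p; cases q) (auto simp: rtr_def add3_def vec_eq_iff forall_3 vector_3 of_rat_add)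

lemma rtr_smul: "rtr (smul3 r p) = of_rat r *\<^sub>R rtr p"
  by (cases p) (auto simp: rtr_def smul3_def vec_eq_iff forall_3 vector_3 of_rat_mult)

lemma rtr_to_rat3: "rtr (to_rat3 u) = to_real3 u"
  by (cases u) (auto simp: rtr_def to_rat3_def to_real3_def vec_eq_iff forall_3 vector_3)

lemma rtr_inj: "rtr p = rtr q \<longleftrightarrow> p = q"
  by (cases p; cases q) (auto simp: rtr_def vec_eq_iff forall_3 vector_3)

lemma rtr_zero: "rtr (0,0,0) = 0"
  by (auto simp: rtr_def vec_eq_iff forall_3 vector_3)

lemma qlin_indep3_iff: "qlin_indep3 u v w \<longleftrightarrow> (\<forall>a b c :: rat.
   of_rat a *\<^sub>R to_real3 u + of_rat b *\<^sub>R to_real3 v + of_rat c *\<^sub>R to_real3 w = 0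
      \<longrightarrow> a = 0 \<and> b = 0 \<and> c = 0)"
proof -
  have "add3 (add3 (smul3 a (to_rat3 u)) (smul3 b (to_rat3 v))) (smul3 c (to_rat3 w)) = (0, 0, 0)
     \<longleftrightarrow> of_rat a *\<^sub>R to_real3 u + of_rat b *\<^sub>R to_real3 v + of_rat c *\<^sub>R to_real3 w = 0" for a b c
    by (metis rtr_add rtr_smul rtr_to_rat3 rtr_inj rtr_zero)
  then show ?thesis unfolding qlin_indep3_def by simp
qed

lemma qspan2_real: "p \<in> qspan2 u v \<Longrightarrow> \<exists>a b::real. rtr p = a *\<^sub>R to_real3 u + b *\<^sub>R to_real3 v"
  unfolding qspan2_def by (auto simp: rtr_add rtr_smul rtr_to_rat3) blast

lemma to_rat3_in_qspan2: "to_rat3 v \<in> qspan2 u v"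
  unfolding qspan2_def
  apply (rule CollectI) apply (rule exI[of _ 0], rule exI[of _ 1])
  by (cases v; cases u) (simp add: add3_def smul3_def to_rat3_def)

lemma to_real3_comp: "to_real3 (a,b,c) $ 1 = of_int a" "to_real3 (a,b,c) $ 2 = of_int b"
  "to_real3 (a,b,c) $ 3 = of_int c"
  by (simp_all add: to_real3_def vector_3)

definition intv :: "real^3 \<Rightarrow> bool" where "intv z \<longleftrightarrow> (\<forall>i. z $ i \<in> \<int>)"

lemma intv_to_real3: "intv (to_real3 u)"
  unfolding intv_def by (cases u) (auto simp: forall_3 to_real3_comp)

lemma intv_cross: "intv a \<Longrightarrow> intv b \<Longrightarrow> intv (a \<times> b)"
  unfolding intv_def by (auto simp: forall_3 cross3_def vector_3)

lemma intv_inner: "intv a \<Longrightarrow> intv b \<Longrightarrow> a \<bullet> b \<in> \<int>"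
  unfolding intv_def by (auto simp: inner_vec_def sum_3)

lemma decomp: "((u \<times> v) \<bullet> (u \<times> v)) *\<^sub>R w = ((w \<times> v) \<bullet> (u \<times> v)) *\<^sub>R u + ((u \<times> w) \<bullet> (u \<times> v)) *\<^sub>R v
   + ((u \<times> v) \<bullet> w) *\<^sub>R (u \<times> v)"
  by (simp add: cross3_simps forall_3)

lemma cross_cross2: "(a \<times> b) \<times> (c \<times> d) = ((a \<times> b) \<bullet> d) *\<^sub>R c - ((a \<times> b) \<bullet> c) *\<^sub>R d"
  by (simp add: cross3_simps forall_3)

lemma dep_parallel:
  assumes "u \<times> v \<noteq> 0" "v \<times> w \<noteq> 0" "a *\<^sub>R u + b *\<^sub>R v + c *\<^sub>R w = 0" "\<not>(a=0 \<and> b=0 \<and> c=0)"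
  shows "\<exists>r. r \<noteq> 0 \<and> u \<times> v = r *\<^sub>R (v \<times> w)"
proof -
  have "(a *\<^sub>R u + b *\<^sub>R v + c *\<^sub>R w) \<times> v = 0" using assms(3) by simp
  hence e: "a *\<^sub>R (u \<times> v) = c *\<^sub>R (v \<times> w)"
    by (simp add: cross_add_left cross_mult_left cross_skew[of w v])
  have v0: "v \<noteq> 0" using assms(2) by auto
  have a0: "a \<noteq> 0"
  proof
    assume "a = 0"
    with e assms(2) have "c = 0" by simp
    with \<open>a=0\<close> assms(3) v0 have "b = 0" by simp
    with \<open>a=0\<close> \<open>c=0\<close> assms(4) show False by simp
  qed
  have c0: "c \<noteq> 0" using e a0 assms(1) by auto
  have "u \<times> v = (c/a) *\<^sub>R (v \<times> w)" using e a0
    by (metis divide_inverse_commute inverse_eq_divide scaleR_scaleR right_inverse scaleR_one mult.commute)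
  thus ?thesis using a0 c0 by (intro exI[of _ "c/a"]) auto
qed




lemma delta_nonneg: "delta \<xi> \<eta> x \<ge> 0"
  by (cases x) (auto simp: delta_def)

lemma delta_ge1: "delta \<xi> \<eta> (a,b,c) \<ge> \<bar>real_of_int a * \<xi> - real_of_int b\<bar>"
  by (auto simp: delta_def)
lemma delta_ge2: "delta \<xi> \<eta> (a,b,c) \<ge> \<bar>real_of_int a * \<eta> - real_of_int c\<bar>"
  by (auto simp: delta_def)

definition Sset :: "real \<Rightarrow> real \<Rightarrow> real \<Rightarrow> real set" where
  "Sset \<xi> \<eta> X = {delta \<xi> \<eta> x | x. 1 \<le> fst x \<and> real_of_int (fst x) \<le> X}"

lemma Delta_Sset: "Delta \<xi> \<eta> X = Inf (Sset \<xi> \<eta> X)"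
  by (simp add: Delta_def Sset_def)

lemma Sset_bdd: "bdd_below (Sset \<xi> \<eta> X)"
  unfolding Sset_def by (rule bdd_belowI[of _ 0]) (auto simp: delta_nonneg)

lemma Sset_mem: "1 \<le> fst x \<Longrightarrow> real_of_int (fst x) \<le> X \<Longrightarrow> delta \<xi> \<eta> x \<in> Sset \<xi> \<eta> X"
  unfolding Sset_def by (intro CollectI exI[of _ x]) simp

lemma Sset_E: "y \<in> Sset \<xi> \<eta> X \<Longrightarrow> \<exists>z. y = delta \<xi> \<eta> z \<and> 1 \<le> fst z \<and> real_of_int (fst z) \<le> X"
  unfolding Sset_def by blast

lemma Sset_ne: "X \<ge> 1 \<Longrightarrow> Sset \<xi> \<eta> X \<noteq> {}"
  using Sset_mem[of "(1,0,0)" X \<xi> \<eta>] by auto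

lemma Delta_le: "1 \<le> fst x \<Longrightarrow> real_of_int (fst x) \<le> X \<Longrightarrow> Delta \<xi> \<eta> X \<le> delta \<xi> \<eta> x"
  unfolding Delta_Sset by (rule cInf_lower[OF Sset_mem Sset_bdd])

lemma Sset_mono: "X \<le> Y \<Longrightarrow> Sset \<xi> \<eta> X \<subseteq> Sset \<xi> \<eta> Y"
  unfolding Sset_def by fastforce

lemma Delta_mono: "1 \<le> X \<Longrightarrow> X \<le> Y \<Longrightarrow> Delta \<xi> \<eta> Y \<le> Delta \<xi> \<eta> X"
  unfolding Delta_Sset
  by (rule cInf_superset_mono[OF Sset_ne Sset_bdd Sset_mono])

lemma Delta_floor: "Delta \<xi> \<eta> X = Delta \<xi> \<eta> (of_int \<lfloor>X\<rfloor>)"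
proof -
  have "Sset \<xi> \<eta> X = Sset \<xi> \<eta> (of_int \<lfloor>X\<rfloor>)"
  proof -
    have "\<And>z::int. (real_of_int z \<le> X) = (real_of_int z \<le> real_of_int \<lfloor>X\<rfloor>)"
      by (simp add: le_floor_iff)
    thus ?thesis unfolding Sset_def by simp
  qed
  thus ?thesis by (simp add: Delta_Sset)
qed

lemma Delta_attain:
  assumes X: "X \<ge> 1"
  shows "\<exists>x. 1 \<le> fst x \<and> real_of_int (fst x) \<le> X \<and> delta \<xi> \<eta> x = Delta \<xi> \<eta> X"
proof -
  define c where "c = delta \<xi> \<eta> (1,0,0)"
  define F where "F = {x::ipt. 1 \<le> fst x \<and> real_of_int (fst x) \<le> X \<and> delta \<xi> \<eta> x \<le> c}"
  define B where "B = \<lceil>X * (\<bar>\<xi>\<bar> + \<bar>\<eta>\<bar>) + c\<rceil>"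
  have sub: "F \<subseteq> Sigma {1..\<lceil>X\<rceil>} (\<lambda>_. Sigma {-B..B} (\<lambda>_. {-B..B}))"
  proof
    fix x assume "x \<in> F"
    then obtain a b d where x: "x = (a,b,d)" and a1: "1 \<le> a" and aX: "real_of_int a \<le> X"
      and dc: "delta \<xi> \<eta> (a,b,d) \<le> c"
      unfolding F_def by (cases x) auto
    have h1: "\<bar>real_of_int a * \<xi> - real_of_int b\<bar> \<le> c" using delta_ge1[where \<xi>=\<xi> and \<eta>=\<eta> and a=a and b=b and c=d] dc by linarith
    have h2: "\<bar>real_of_int a * \<eta> - real_of_int d\<bar> \<le> c" using delta_ge2[where \<xi>=\<xi> and \<eta>=\<eta> and a=a and b=b and c=d] dc by linarith
    have ax: "\<bar>real_of_int a * \<xi>\<bar> \<le> X * \<bar>\<xi>\<bar>" using a1 aX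
      by (simp add: abs_mult mult_right_mono)
    have ae: "\<bar>real_of_int a * \<eta>\<bar> \<le> X * \<bar>\<eta>\<bar>" using a1 aX
      by (simp add: abs_mult mult_right_mono)
    have "X * \<bar>\<eta>\<bar> \<ge> 0" "X * \<bar>\<xi>\<bar> \<ge> 0" using X by simp_all
    hence "\<bar>real_of_int b\<bar> \<le> X * (\<bar>\<xi>\<bar> + \<bar>\<eta>\<bar>) + c" using h1 ax
      unfolding distrib_left by linarith
    hence b: "\<bar>b\<bar> \<le> B" unfolding B_def by linarith
    have "X * \<bar>\<eta>\<bar> \<ge> 0" "X * \<bar>\<xi>\<bar> \<ge> 0" using X by simp_all
    hence "\<bar>real_of_int d\<bar> \<le> X * (\<bar>\<xi>\<bar> + \<bar>\<eta>\<bar>) + c" using h2 ae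
      unfolding distrib_left by linarith
    hence d: "\<bar>d\<bar> \<le> B" unfolding B_def by linarith
    have "a \<le> \<lceil>X\<rceil>" using aX by linarith
    thus "x \<in> Sigma {1..\<lceil>X\<rceil>} (\<lambda>_. Sigma {-B..B} (\<lambda>_. {-B..B}))" using x a1 b d by auto
  qed
  have finF: "finite F" by (rule finite_subset[OF sub]) auto
  have oneF: "(1,0,0) \<in> F" using X unfolding F_def c_def by auto
  define m where "m = Min (delta \<xi> \<eta> ` F)"
  have mF: "m \<in> delta \<xi> \<eta> ` F" unfolding m_def using finF oneF by (intro Min_in) auto
  then obtain x where xF: "x \<in> F" and mx: "m = delta \<xi> \<eta> x" by auto
  have "Inf (Sset \<xi> \<eta> X) = m"
  proof (rule cInf_eq_minimum)
    show "m \<in> Sset \<xi> \<eta> X" using xF mx unfolding F_def by (auto intro: Sset_mem)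
  next
    fix y assume "y \<in> Sset \<xi> \<eta> X"
    then obtain z where z: "y = delta \<xi> \<eta> z" "1 \<le> fst z" "real_of_int (fst z) \<le> X"
      using Sset_E by blast
    show "m \<le> y"
    proof (cases "delta \<xi> \<eta> z \<le> c")
      case True
      hence "z \<in> F" using z unfolding F_def by auto
      thus ?thesis unfolding m_def z using finF by auto
    next
      case False
      have "m \<le> c" unfolding m_def c_def using finF oneF by (intro Min_le) auto
      thus ?thesis using False z by auto
    qed
  qed
  hence "Delta \<xi> \<eta> X = delta \<xi> \<eta> x" using mx by (simp add: Delta_Sset)
  moreover have "1 \<le> fst x \<and> real_of_int (fst x) \<le> X" using xF unfolding F_def by simp
  ultimately show ?thesis by (intro exI[of _ x]) simp
qed

context
  fixes \<xi> \<eta> :: real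
  assumes indep: "\<forall>a b c :: rat. of_rat a + of_rat b * \<xi> + of_rat c * \<eta> = 0
                     \<longrightarrow> a = 0 \<and> b = 0 \<and> c = 0"
begin

lemma delta_pos: "1 \<le> fst x \<Longrightarrow> delta \<xi> \<eta> x > 0"
proof (cases x)
  case (fields a b d)
  assume "1 \<le> fst x"
  hence a: "a \<ge> 1" using fields by simp
  show ?thesis
  proof (rule ccontr)
    assume "\<not> ?thesis"
    hence "delta \<xi> \<eta> x = 0" using delta_nonneg[of \<xi> \<eta> x] by linarith
    hence "real_of_int a * \<xi> - real_of_int b = 0" using delta_ge1[where \<xi>=\<xi> and \<eta>=\<eta> and a=a and b=b and c=d] fields by auto
    hence "of_rat (of_int (-b)) + of_rat (of_int a) * \<xi> + of_rat 0 * \<eta> = 0"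
      by (simp add: of_rat_of_int_eq of_rat_minus algebra_simps)
    hence "(of_int a :: rat) = 0" using indep[rule_format, of "of_int (-b)" "of_int a" 0] by simp
    thus False using a by simp
  qed
qed

lemma Delta_pos: "X \<ge> 1 \<Longrightarrow> Delta \<xi> \<eta> X > 0"
proof -
  assume "X \<ge> 1"
  then obtain x where "1 \<le> fst x" "delta \<xi> \<eta> x = Delta \<xi> \<eta> X"
    using Delta_attain[where X=X and \<xi>=\<xi> and \<eta>=\<eta>] by blast
  thus ?thesis using delta_pos[of x] by simp
qed

end



lemma D_ge1: "t \<in> disc_points \<xi> \<eta> \<Longrightarrow> t \<ge> 1"
  unfolding disc_points_def by auto

lemma D_int: assumes "t \<in> disc_points \<xi> \<eta>" shows "t = of_int \<lfloor>t\<rfloor>"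
proof (rule ccontr)
  assume nt: "t \<noteq> of_int \<lfloor>t\<rfloor>"
  hence t1: "t > 1" "\<not> isCont (Delta \<xi> \<eta>) t" using assms unfolding disc_points_def by auto
  define f where "f = \<lfloor>t\<rfloor>"
  have ft: "of_int f < t" "t < of_int f + 1" using nt unfolding f_def by linarith+
  have f1: "f \<ge> 1" using t1 unfolding f_def by linarith
  define d where "d = min (t - of_int f) (of_int f + 1 - t)"
  have d: "d > 0" using ft unfolding d_def by simp
  have "\<forall>\<^sub>F s in at t. Delta \<xi> \<eta> t = Delta \<xi> \<eta> s"
    unfolding eventually_at
  proof (intro exI[of _ d] conjI ballI impI)
    fix s assume "s \<in> UNIV" "s \<noteq> t \<and> dist s t < d"
    hence "\<bar>s - t\<bar> < d" by (simp add: dist_real_def)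
    hence "of_int f \<le> s" "s < of_int f + 1" unfolding d_def by linarith+
    hence "\<lfloor>s\<rfloor> = f" by (simp add: floor_eq_iff)
    thus "Delta \<xi> \<eta> t = Delta \<xi> \<eta> s" using Delta_floor[of \<xi> \<eta> s] Delta_floor[of \<xi> \<eta> t]
      unfolding f_def by simp
  qed (use d in auto)
  hence "isCont (Delta \<xi> \<eta>) t" unfolding isCont_def
    by (rule Lim_transform_eventually[OF tendsto_const])
  with t1 show False by simp
qed

lemma D_jump:
  assumes n: "n \<ge> (2::int)" and lt: "Delta \<xi> \<eta> (of_int n) < Delta \<xi> \<eta> (of_int n - 1)"
  shows "real_of_int n \<in> disc_points \<xi> \<eta>"
proof -
  have "\<not> isCont (Delta \<xi> \<eta>) (of_int n)"
  proof
    assume "isCont (Delta \<xi> \<eta>) (of_int n)"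
    hence "continuous (at_left (of_int n)) (Delta \<xi> \<eta>)"
      using continuous_at_split by blast
    hence l1: "(Delta \<xi> \<eta> \<longlongrightarrow> Delta \<xi> \<eta> (of_int n)) (at_left (of_int n))"
      by (simp add: continuous_within)
    have "\<forall>\<^sub>F s in at_left (real_of_int n). s \<in> {of_int n - 1<..<of_int n}"
      by (rule eventually_at_left_real) simp
    hence "\<forall>\<^sub>F s in at_left (real_of_int n). Delta \<xi> \<eta> (of_int n - 1) = Delta \<xi> \<eta> s"
    proof eventually_elim
      case (elim s)
      hence "\<lfloor>s\<rfloor> = n - 1" by (simp add: floor_eq_iff)
      thus ?case using Delta_floor[of \<xi> \<eta> s] by simp
    qed
    hence l2: "(Delta \<xi> \<eta> \<longlongrightarrow> Delta \<xi> \<eta> (of_int n - 1)) (at_left (of_int n))"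
      by (rule Lim_transform_eventually[OF tendsto_const])
    have "Delta \<xi> \<eta> (of_int n) = Delta \<xi> \<eta> (of_int n - 1)"
      using tendsto_unique[OF trivial_limit_at_left_real l1 l2] .
    with lt show False by simp
  qed
  thus ?thesis using n unfolding disc_points_def by auto
qed




lemma Delta_small:
  assumes approx: "\<exists>lam::real. lam > 1/2 \<and> (\<forall>\<^sub>F X in at_top. X \<ge> 1 \<longrightarrow>
        (\<exists>x0 x1 x2 :: int. (x0, x1, x2) \<noteq> (0, 0, 0) \<and> \<bar>real_of_int x0\<bar> \<le> X \<and>
           \<bar>real_of_int x0 * \<xi> - real_of_int x1\<bar> \<le> X powr (-lam) \<and>
           \<bar>real_of_int x0 * \<eta> - real_of_int x2\<bar> \<le> X powr (-lam)))"
    and e: "e > 0"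
  shows "\<exists>X\<ge>1. Delta \<xi> \<eta> X < e"
proof -
  obtain lam where lam: "lam > 1/2" and ev: "\<forall>\<^sub>F X in at_top. X \<ge> 1 \<longrightarrow>
        (\<exists>x0 x1 x2 :: int. (x0, x1, x2) \<noteq> (0, 0, 0) \<and> \<bar>real_of_int x0\<bar> \<le> X \<and>
           \<bar>real_of_int x0 * \<xi> - real_of_int x1\<bar> \<le> X powr (-lam) \<and>
           \<bar>real_of_int x0 * \<eta> - real_of_int x2\<bar> \<le> X powr (-lam))"
    using approx by blast
  define P where "P = (\<lambda>X. \<exists>x0 x1 x2 :: int. (x0, x1, x2) \<noteq> (0, 0, 0) \<and> \<bar>real_of_int x0\<bar> \<le> X \<and>
           \<bar>real_of_int x0 * \<xi> - real_of_int x1\<bar> \<le> X powr (-lam) \<and>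
           \<bar>real_of_int x0 * \<eta> - real_of_int x2\<bar> \<le> X powr (-lam))"
  have ev1: "\<forall>\<^sub>F X in at_top. X \<ge> 1 \<longrightarrow> P X" using ev unfolding P_def .
  have "((\<lambda>X. X powr (-lam)) \<longlongrightarrow> 0) at_top"
    by (rule tendsto_neg_powr) (use lam in \<open>auto simp: filterlim_ident\<close>)
  hence ev2: "\<forall>\<^sub>F X in at_top. X powr (-lam) < min e 1"
    using e by (intro order_tendstoD(2)) auto
  have "\<forall>\<^sub>F X in at_top. (X \<ge> 1 \<longrightarrow> P X) \<and> X powr (-lam) < min e 1 \<and> X \<ge> 1"
    by (intro eventually_conj ev1 ev2 eventually_ge_at_top)
  then obtain N where N: "\<And>X. X \<ge> N \<Longrightarrow> (X \<ge> 1 \<longrightarrow> P X) \<and> X powr (-lam) < min e 1 \<and> X \<ge> 1"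
    unfolding eventually_at_top_linorder by blast
  define X where "X = N"
  have NX: "(X \<ge> 1 \<longrightarrow> P X) \<and> X powr (-lam) < min e 1 \<and> X \<ge> 1" using N[of X] unfolding X_def by simp
  hence X1: "X \<ge> 1" and PX: "P X" and small: "X powr (-lam) < min e 1" by auto
  from PX obtain x0 x1 x2 :: int where nz: "(x0, x1, x2) \<noteq> (0, 0, 0)" and x0X: "\<bar>real_of_int x0\<bar> \<le> X"
    and h1': "\<bar>real_of_int x0 * \<xi> - real_of_int x1\<bar> \<le> X powr (-lam)"
    and h2': "\<bar>real_of_int x0 * \<eta> - real_of_int x2\<bar> \<le> X powr (-lam)"
    unfolding P_def by blast
  have h1: "\<bar>real_of_int x0 * \<xi> - real_of_int x1\<bar> < min e 1" using h1' small by linarith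
  have h2: "\<bar>real_of_int x0 * \<eta> - real_of_int x2\<bar> < min e 1" using h2' small by linarith
  have "x0 \<noteq> 0"
  proof
    assume "x0 = 0"
    with h1 h2 have "\<bar>real_of_int x1\<bar> < 1" "\<bar>real_of_int x2\<bar> < 1" by auto
    hence "x1 = 0" "x2 = 0" by linarith+
    with nz \<open>x0 = 0\<close> show False by simp
  qed
  show ?thesis
  proof (cases "x0 > 0")
    case True
    have "Delta \<xi> \<eta> X \<le> delta \<xi> \<eta> (x0, x1, x2)"
      by (rule Delta_le) (use True x0X in auto)
    also have "\<dots> < e" using h1 h2 by (simp add: delta_def)
    finally show ?thesis using X1 by blast
  next
    case False
    hence neg: "x0 < 0" using \<open>x0 \<noteq> 0\<close> by simp
    have "Delta \<xi> \<eta> X \<le> delta \<xi> \<eta> (-x0, -x1, -x2)"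
      by (rule Delta_le) (use neg x0X in auto)
    also have "\<dots> < e"
    proof -
      have "\<bar>real_of_int (-x0) * \<xi> - real_of_int (-x1)\<bar> = \<bar>real_of_int x0 * \<xi> - real_of_int x1\<bar>"
           "\<bar>real_of_int (-x0) * \<eta> - real_of_int (-x2)\<bar> = \<bar>real_of_int x0 * \<eta> - real_of_int x2\<bar>"
        by (simp_all add: abs_minus_commute)
      thus ?thesis using h1 h2 by (simp add: delta_def)
    qed
    finally show ?thesis using X1 by blast
  qed
qed



lemma D_infinite:
  assumes indep: "\<forall>a b c :: rat. of_rat a + of_rat b * \<xi> + of_rat c * \<eta> = 0
                     \<longrightarrow> a = 0 \<and> b = 0 \<and> c = 0"
  and approx: "\<exists>lam::real. lam > 1/2 \<and> (\<forall>\<^sub>F X in at_top. X \<ge> 1 \<longrightarrow>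
        (\<exists>x0 x1 x2 :: int. (x0, x1, x2) \<noteq> (0, 0, 0) \<and> \<bar>real_of_int x0\<bar> \<le> X \<and>
           \<bar>real_of_int x0 * \<xi> - real_of_int x1\<bar> \<le> X powr (-lam) \<and>
           \<bar>real_of_int x0 * \<eta> - real_of_int x2\<bar> \<le> X powr (-lam)))"
  shows "infinite (disc_points \<xi> \<eta>)"
proof
  let ?D = "disc_points \<xi> \<eta>"
  let ?d = "Delta \<xi> \<eta>"
  assume fin: "finite ?D"
  have "1 \<in> ?D" unfolding disc_points_def by simp
  define M where "M = \<lceil>Max ?D\<rceil>"
  have MD: "t \<le> of_int M" if "t \<in> ?D" for t
    using Max_ge[OF fin that] unfolding M_def by linarith
  have M1: "M \<ge> 1" using MD[OF \<open>1 \<in> ?D\<close>] by simp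
  have step: "?d (of_int (M + int m)) = ?d (of_int M)" for m :: nat
  proof (induction m)
    case 0 thus ?case by simp
  next
    case (Suc m)
    define n where "n = M + int m + 1"
    have n2: "n \<ge> 2" using M1 unfolding n_def by simp
    have "real_of_int n \<notin> ?D" using MD[of "real_of_int n"] unfolding n_def by auto
    hence "\<not> ?d (of_int n) < ?d (of_int n - 1)" using D_jump[OF n2] by blast
    moreover have "?d (of_int n) \<le> ?d (of_int n - 1)"
      by (rule Delta_mono) (use n2 in auto)
    ultimately have "?d (of_int n) = ?d (of_int n - 1)" by simp
    also have "of_int n - 1 = real_of_int (M + int m)" unfolding n_def by simp
    finally show ?case using Suc.IH unfolding n_def by (simp add: ac_simps)
  qed
  have const: "?d X = ?d (of_int M)" if "X \<ge> of_int M" for X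
  proof -
    have "\<lfloor>X\<rfloor> \<ge> M" using that by linarith
    hence "\<lfloor>X\<rfloor> = M + int (nat (\<lfloor>X\<rfloor> - M))" by simp
    hence "?d (of_int \<lfloor>X\<rfloor>) = ?d (of_int M)" using step[of "nat (\<lfloor>X\<rfloor> - M)"] by metis
    thus ?thesis using Delta_floor[of \<xi> \<eta> X] by simp
  qed
  have pos: "?d (of_int M) > 0" using Delta_pos[OF indep] M1 by simp
  obtain X where X1: "X \<ge> 1" and small: "?d X < ?d (of_int M)"
    using Delta_small[OF approx pos] by blast
  show False
  proof (cases "X \<le> of_int M")
    case True
    hence "?d (of_int M) \<le> ?d X" using X1 by (intro Delta_mono) auto
    thus False using small by simp
  next
    case False
    thus False using const[of X] small by simp
  qed
qed

definition Dn :: "real \<Rightarrow> real \<Rightarrow> nat set" where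
  "Dn \<xi> \<eta> = {n. real n \<in> disc_points \<xi> \<eta>}"

lemma D_eq: "disc_points \<xi> \<eta> = real ` Dn \<xi> \<eta>"
proof
  show "disc_points \<xi> \<eta> \<subseteq> real ` Dn \<xi> \<eta>"
  proof
    fix t assume t: "t \<in> disc_points \<xi> \<eta>"
    have "t = of_int \<lfloor>t\<rfloor>" by (rule D_int[OF t])
    moreover have "t \<ge> 1" by (rule D_ge1[OF t])
    ultimately have "t = real (nat \<lfloor>t\<rfloor>)" by (metis floor_of_nat le_floor_iff of_int_1 of_nat_nat floor_le_zero not_le zero_le_one order_trans)
    thus "t \<in> real ` Dn \<xi> \<eta>" using t unfolding Dn_def by (intro image_eqI[of _ _ "nat \<lfloor>t\<rfloor>"]) auto
  qed
qed (auto simp: Dn_def)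

lemma Dn_infinite: "infinite (disc_points \<xi> \<eta>) \<Longrightarrow> infinite (Dn \<xi> \<eta>)"
  using D_eq by (metis finite_imageI)

lemma Dn_ge1: "n \<in> Dn \<xi> \<eta> \<Longrightarrow> n \<ge> 1"
  unfolding Dn_def using D_ge1 by fastforce

lemma below_enum:
  assumes inf: "infinite (Dn \<xi> \<eta>)"
  shows "{s \<in> disc_points \<xi> \<eta>. s < real (enumerate (Dn \<xi> \<eta>) m)} =
         (\<lambda>j. real (enumerate (Dn \<xi> \<eta>) j)) ` {..<m}"
proof
  let ?e = "enumerate (Dn \<xi> \<eta>)"
  show "{s \<in> disc_points \<xi> \<eta>. s < real (?e m)} \<subseteq> (\<lambda>j. real (?e j)) ` {..<m}"
  proof
    fix s assume s: "s \<in> {s \<in> disc_points \<xi> \<eta>. s < real (?e m)}"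
    then obtain n where n: "n \<in> Dn \<xi> \<eta>" "s = real n" using D_eq by blast
    then obtain j where j: "?e j = n" using enumerate_Ex[OF inf] by blast
    have "?e j < ?e m" using s n j by simp
    hence "j < m" using inf by simp
    thus "s \<in> (\<lambda>j. real (?e j)) ` {..<m}" using n j by auto
  qed
next
  let ?e = "enumerate (Dn \<xi> \<eta>)"
  show "(\<lambda>j. real (?e j)) ` {..<m} \<subseteq> {s \<in> disc_points \<xi> \<eta>. s < real (?e m)}"
  proof
    fix s assume "s \<in> (\<lambda>j. real (?e j)) ` {..<m}"
    then obtain j where j: "j < m" "s = real (?e j)" by auto
    have "?e j \<in> Dn \<xi> \<eta>" using enumerate_in_set[OF inf] .
    hence "s \<in> disc_points \<xi> \<eta>" using j unfolding Dn_def by simp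
    moreover have "?e j < ?e m" using j inf by simp
    ultimately show "s \<in> {s \<in> disc_points \<xi> \<eta>. s < real (?e m)}" using j by simp
  qed
qed

lemma Xseq_enum:
  assumes inf: "infinite (Dn \<xi> \<eta>)" and k: "k \<ge> 1"
  shows "Xseq \<xi> \<eta> k = real (enumerate (Dn \<xi> \<eta>) (k - 1))"
proof -
  let ?e = "enumerate (Dn \<xi> \<eta>)"
  let ?D = "disc_points \<xi> \<eta>"
  have card: "finite {s \<in> ?D. s < real (?e m)} \<and> card {s \<in> ?D. s < real (?e m)} = m" for m
  proof -
    have "inj_on (\<lambda>j. real (?e j)) {..<m}"
      using inf by (intro inj_onI) (metis inj_enumerate[OF inf] injD of_nat_eq_iff)
    thus ?thesis unfolding below_enum[OF inf] by (simp add: card_image)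
  qed
  show ?thesis unfolding Xseq_def
  proof (rule the_equality)
    show "real (?e (k-1)) \<in> ?D \<and> finite {s \<in> ?D. s < real (?e (k-1))} \<and>
          card {s \<in> ?D. s < real (?e (k-1))} = k - 1"
      using card enumerate_in_set[OF inf] unfolding Dn_def by auto
  next
    fix t assume t: "t \<in> ?D \<and> finite {s \<in> ?D. s < t} \<and> card {s \<in> ?D. s < t} = k - 1"
    then obtain n where n: "n \<in> Dn \<xi> \<eta>" "t = real n" using D_eq by blast
    then obtain j where j: "?e j = n" using enumerate_Ex[OF inf] by blast
    have "j = k - 1" using t card[of j] n j by simp
    thus "t = real (?e (k-1))" using n j by simp
  qed
qed




lemma delta_scale:
  assumes a0: "a0 > 0" and b0: "b0 > 0"
    and h1: "real_of_int a0 * real_of_int b1 = real_of_int a1 * real_of_int b0"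
    and h2: "real_of_int a0 * real_of_int b2 = real_of_int a2 * real_of_int b0"
  shows "real_of_int a0 * delta \<xi> \<eta> (b0,b1,b2) = real_of_int b0 * delta \<xi> \<eta> (a0,a1,a2)"
proof -
  have e1: "real_of_int a0 * \<bar>real_of_int b0 * \<xi> - real_of_int b1\<bar> = real_of_int b0 * \<bar>real_of_int a0 * \<xi> - real_of_int a1\<bar>"
  proof -
    have "real_of_int a0 * (real_of_int b0 * \<xi> - real_of_int b1) = real_of_int b0 * (real_of_int a0 * \<xi> - real_of_int a1)"
      using h1 by (simp add: algebra_simps)
    hence "\<bar>real_of_int a0\<bar> * \<bar>real_of_int b0 * \<xi> - real_of_int b1\<bar> = \<bar>real_of_int b0\<bar> * \<bar>real_of_int a0 * \<xi> - real_of_int a1\<bar>"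
      by (metis abs_mult)
    thus ?thesis using a0 b0 by simp
  qed
  have e2: "real_of_int a0 * \<bar>real_of_int b0 * \<eta> - real_of_int b2\<bar> = real_of_int b0 * \<bar>real_of_int a0 * \<eta> - real_of_int a2\<bar>"
  proof -
    have "real_of_int a0 * (real_of_int b0 * \<eta> - real_of_int b2) = real_of_int b0 * (real_of_int a0 * \<eta> - real_of_int a2)"
      using h2 by (simp add: algebra_simps)
    hence "\<bar>real_of_int a0\<bar> * \<bar>real_of_int b0 * \<eta> - real_of_int b2\<bar> = \<bar>real_of_int b0\<bar> * \<bar>real_of_int a0 * \<eta> - real_of_int a2\<bar>"
      by (metis abs_mult)
    thus ?thesis using a0 b0 by simp
  qed
  show ?thesis using a0 b0 e1 e2 by (simp add: delta_def max_mult_distrib_left)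
qed

lemma Ints_rat: "y \<in> \<int> \<Longrightarrow> \<exists>q::rat. y = of_rat q"
  by (metis Ints_cases of_rat_of_int_eq)

context
  fixes \<xi> \<eta> :: real and x :: "nat \<Rightarrow> int \<times> int \<times> int"
  assumes indep: "\<forall>a b c :: rat. of_rat a + of_rat b * \<xi> + of_rat c * \<eta> = 0
                     \<longrightarrow> a = 0 \<and> b = 0 \<and> c = 0"
    and approx: "\<exists>lam::real. lam > 1/2 \<and> (\<forall>\<^sub>F X in at_top. X \<ge> 1 \<longrightarrow>
        (\<exists>x0 x1 x2 :: int. (x0, x1, x2) \<noteq> (0, 0, 0) \<and> \<bar>real_of_int x0\<bar> \<le> X \<and>
           \<bar>real_of_int x0 * \<xi> - real_of_int x1\<bar> \<le> X powr (-lam) \<and>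
           \<bar>real_of_int x0 * \<eta> - real_of_int x2\<bar> \<le> X powr (-lam)))"
    and mp: "minimal_points \<xi> \<eta> x"
begin

lemma Dinf: "infinite (Dn \<xi> \<eta>)"
  using Dn_infinite D_infinite[OF indep approx] by blast

lemma X_mono: "k \<ge> 1 \<Longrightarrow> Xseq \<xi> \<eta> k < Xseq \<xi> \<eta> (k+1)"
  using Xseq_enum[OF Dinf] Dinf by simp

lemma X_ge1: "k \<ge> 1 \<Longrightarrow> Xseq \<xi> \<eta> k \<ge> 1"
  using Xseq_enum[OF Dinf] Dn_ge1 enumerate_in_set[OF Dinf] by fastforce

lemma X_big: assumes k: "k \<ge> 1" shows "Xseq \<xi> \<eta> k \<ge> real (k - 1)"
proof -
  have "k - 1 \<le> enumerate (Dn \<xi> \<eta>) (k-1)" by (rule le_enumerate[OF Dinf])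
  hence "real (k - 1) \<le> real (enumerate (Dn \<xi> \<eta>) (k-1))" by (simp only: of_nat_le_iff)
  thus ?thesis by (subst Xseq_enum[OF Dinf k])
qed

lemma fstx: "k \<ge> 1 \<Longrightarrow> real_of_int (fst (x k)) = Xseq \<xi> \<eta> k"
  using mp unfolding minimal_points_def by blast

lemma dx: "k \<ge> 1 \<Longrightarrow> delta \<xi> \<eta> (x k) = Delta \<xi> \<eta> (Xseq \<xi> \<eta> k)"
  using mp unfolding minimal_points_def by blast

definition V :: "nat \<Rightarrow> real^3" where "V k = to_real3 (x k)"
definition N :: "nat \<Rightarrow> real^3" where "N k = V k \<times> V (k+1)"

lemma V1: "V k $ 1 = real_of_int (fst (x k))"
  unfolding V_def by (cases "x k") (simp add: to_real3_comp)

lemma intvV: "intv (V k)" unfolding V_def by (rule intv_to_real3)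
lemma intvN: "intv (N k)" unfolding N_def by (intro intv_cross intvV)

lemma N_nz: assumes k: "k \<ge> 1" shows "N k \<noteq> 0"
proof
  assume N0: "N k = 0"
  obtain a0 a1 a2 where xa: "x k = (a0,a1,a2)" by (cases "x k")
  obtain b0 b1 b2 where xb: "x (k+1) = (b0,b1,b2)" by (cases "x (k+1)")
  have XA: "real_of_int a0 = Xseq \<xi> \<eta> k" using fstx[OF k] xa by simp
  have XB: "real_of_int b0 = Xseq \<xi> \<eta> (k+1)" using fstx[of "k+1"] k xb by simp
  have c2: "(N k) $ 2 = 0" "(N k) $ 3 = 0" using N0 by simp_all
  hence "real_of_int a2 * real_of_int b0 - real_of_int a0 * real_of_int b2 = 0"
        "real_of_int a0 * real_of_int b1 - real_of_int a1 * real_of_int b0 = 0"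
    unfolding N_def V_def xa xb to_real3_def cross3_def by (simp_all add: vector_3)
  hence h1: "real_of_int a0 * real_of_int b1 = real_of_int a1 * real_of_int b0"
    and h2: "real_of_int a0 * real_of_int b2 = real_of_int a2 * real_of_int b0" by simp_all
  have A1: "Xseq \<xi> \<eta> k \<ge> 1" using X_ge1[OF k] .
  have AB: "Xseq \<xi> \<eta> k < Xseq \<xi> \<eta> (k+1)" using X_mono[OF k] .
  have a0: "a0 > 0" using XA A1 by simp
  have b0: "b0 > 0" using XB A1 AB by simp
  have eq: "real_of_int a0 * delta \<xi> \<eta> (x (k+1)) = real_of_int b0 * delta \<xi> \<eta> (x k)"
    using delta_scale[OF a0 b0 h1 h2] xa xb by simp
  define DA where "DA = Delta \<xi> \<eta> (Xseq \<xi> \<eta> k)"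
  define DB where "DB = Delta \<xi> \<eta> (Xseq \<xi> \<eta> (k+1))"
  have dA: "delta \<xi> \<eta> (x k) = DA" using dx[OF k] unfolding DA_def .
  have dB: "delta \<xi> \<eta> (x (k+1)) = DB" using dx[of "k+1"] unfolding DB_def by simp
  have DApos: "DA > 0" unfolding DA_def using Delta_pos[OF indep A1] .
  have mono: "DB \<le> DA" unfolding DA_def DB_def using A1 AB by (intro Delta_mono) auto
  have "Xseq \<xi> \<eta> k * DB = Xseq \<xi> \<eta> (k+1) * DA" using eq dA dB XA XB by simp
  moreover have "Xseq \<xi> \<eta> k * DB \<le> Xseq \<xi> \<eta> k * DA" using mono A1 by (intro mult_left_mono) auto
  moreover have "Xseq \<xi> \<eta> k * DA < Xseq \<xi> \<eta> (k+1) * DA" using AB DApos by (intro mult_strict_right_mono)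
  ultimately show False by simp
qed

lemma dep_step:
  assumes k: "k \<ge> 2" and nI: "\<not> qlin_indep3 (x (k - 1)) (x k) (x (k + 1))"
  shows "\<exists>r. r \<noteq> 0 \<and> N (k-1) = r *\<^sub>R N k"
proof -
  obtain a b c :: rat where comb: "of_rat a *\<^sub>R V (k-1) + of_rat b *\<^sub>R V k + of_rat c *\<^sub>R V (k+1) = 0"
    and nt: "\<not> (a = 0 \<and> b = 0 \<and> c = 0)"
    using nI unfolding qlin_indep3_iff V_def by blast
  have kk: "k - 1 + 1 = k" using k by simp
  have n1: "V (k-1) \<times> V k \<noteq> 0" using N_nz[of "k-1"] k unfolding N_def kk by simp
  have n2: "V k \<times> V (k+1) \<noteq> 0" using N_nz[of k] k unfolding N_def by simp
  have "\<not> (real_of_rat a = 0 \<and> real_of_rat b = 0 \<and> real_of_rat c = 0)" using nt by simp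
  from dep_parallel[OF n1 n2 comb this] show ?thesis unfolding N_def kk .
qed

lemma indep_det:
  assumes j: "j \<ge> 2" and I: "qlin_indep3 (x (j - 1)) (x j) (x (j + 1))"
  shows "N (j-1) \<bullet> V (j+1) \<noteq> 0"
proof
  assume z: "N (j-1) \<bullet> V (j+1) = 0"
  have jj: "j - 1 + 1 = j" using j by simp
  let ?u = "V (j-1)" and ?v = "V j" and ?w = "V (j+1)"
  have n: "?u \<times> ?v = N (j-1)" unfolding N_def jj ..
  have nz: "N (j-1) \<noteq> 0" using N_nz[of "j-1"] j by simp
  have dec: "(N (j-1) \<bullet> N (j-1)) *\<^sub>R ?w = ((?w \<times> ?v) \<bullet> N (j-1)) *\<^sub>R ?u + ((?u \<times> ?w) \<bullet> N (j-1)) *\<^sub>R ?v"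
    using decomp[of ?u ?v ?w] z unfolding n by simp
  obtain qa where qa: "(?w \<times> ?v) \<bullet> N (j-1) = of_rat qa"
    using Ints_rat intv_inner intv_cross intvV intvN by metis
  obtain qb where qb: "(?u \<times> ?w) \<bullet> N (j-1) = of_rat qb"
    using Ints_rat intv_inner intv_cross intvV intvN by metis
  obtain qn where qn: "N (j-1) \<bullet> N (j-1) = of_rat qn"
    using Ints_rat intv_inner intvN by metis
  have qn0: "qn \<noteq> 0" using qn nz by auto
  have "of_rat qa *\<^sub>R ?u + of_rat qb *\<^sub>R ?v + of_rat (-qn) *\<^sub>R ?w = 0"
    using dec qa qb qn by (simp add: of_rat_minus)
  hence "qn = 0" using I unfolding qlin_indep3_iff V_def by (metis neg_equal_0_iff_equal)
  with qn0 show False by simp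
qed

lemma chain:
  assumes i: "i \<ge> 2" and gap: "\<forall>k. i < k \<and> k < j \<longrightarrow> \<not> qlin_indep3 (x (k - 1)) (x k) (x (k + 1))"
  shows "i + d < j \<Longrightarrow> \<exists>r. r \<noteq> 0 \<and> N (i + d) = r *\<^sub>R N i"
proof (induction d)
  case 0 show ?case by (intro exI[of _ 1]) simp
next
  case (Suc d)
  then obtain r where r: "r \<noteq> 0" "N (i + d) = r *\<^sub>R N i" by auto
  define k where "k = i + Suc d"
  have "i < k \<and> k < j" using Suc.prems unfolding k_def by simp
  hence "\<not> qlin_indep3 (x (k - 1)) (x k) (x (k + 1))" using gap by blast
  then obtain s where s: "s \<noteq> 0" "N (k-1) = s *\<^sub>R N k" using dep_step[of k] i unfolding k_def by auto
  have "k - 1 = i + d" unfolding k_def by simp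
  hence e: "s *\<^sub>R N k = r *\<^sub>R N i" using s r by simp
  have "N k = inverse s *\<^sub>R (s *\<^sub>R N k)" using s(1) by simp
  also have "\<dots> = (inverse s * r) *\<^sub>R N i" unfolding e by simp
  finally have "N k = (inverse s * r) *\<^sub>R N i" .
  thus ?case using s r unfolding k_def by (intro exI[of _ "inverse s * r"]) simp
qed

lemma N_dot_next: "N i \<bullet> V (i+1) = 0" "N i \<bullet> V i = 0"
  unfolding N_def by (simp_all add: dot_cross_self)


lemma norm_cross_le: "norm (a \<times> b) \<le> norm a * norm b"
proof -
  have "(norm (a \<times> b))\<^sup>2 \<le> (norm a * norm b)\<^sup>2" using norm_cross_dot[of a b]
    by (metis le_add_same_cancel1 zero_le_power2)
  thus ?thesis by (rule power2_le_imp_le) simp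
qed

lemma part2:
  assumes i: "i \<ge> 2" and Ij: "qlin_indep3 (x (j - 1)) (x j) (x (j + 1))" and ij: "i < j"
    and gap: "\<forall>k. i < k \<and> k < j \<longrightarrow> \<not> qlin_indep3 (x (k - 1)) (x k) (x (k + 1))"
  shows "qspan2 (x i) (x (i+1)) \<noteq> qspan2 (x j) (x (j+1)) \<and>
         Xseq \<xi> \<eta> j \<le> Hgt (x i) (x (i+1)) * Hgt (x j) (x (j+1))"
proof -
  have j: "j \<ge> 2" using i ij by simp
  have jj: "j - 1 + 1 = j" using j by simp
  obtain r where r: "r \<noteq> 0" "N (i + (j - 1 - i)) = r *\<^sub>R N i"
    using chain[OF i gap, of "j - 1 - i"] ij by auto
  have r2: "N (j-1) = r *\<^sub>R N i" using r ij by (simp add: add_diff_inverse_nat)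
  have "N (j-1) \<bullet> V j = 0" using N_dot_next(1)[of "j-1"] unfolding jj .
  hence NiVj: "N i \<bullet> V j = 0" using r(1) unfolding r2 by simp
  have "N (j-1) \<bullet> V (j+1) \<noteq> 0" by (rule indep_det[OF j Ij])
  hence NiVj1: "N i \<bullet> V (j+1) \<noteq> 0" unfolding r2 by simp
  have part_a: "qspan2 (x i) (x (i+1)) \<noteq> qspan2 (x j) (x (j+1))"
  proof
    assume eq: "qspan2 (x i) (x (i+1)) = qspan2 (x j) (x (j+1))"
    have "to_rat3 (x (j+1)) \<in> qspan2 (x i) (x (i+1))" unfolding eq by (rule to_rat3_in_qspan2)
    then obtain a b where "rtr (to_rat3 (x (j+1))) = a *\<^sub>R to_real3 (x i) + b *\<^sub>R to_real3 (x (i+1))"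
      using qspan2_real by blast
    hence "V (j+1) = a *\<^sub>R V i + b *\<^sub>R V (i+1)" unfolding rtr_to_rat3 V_def .
    hence "N i \<bullet> V (j+1) = 0" using N_dot_next[of i] by (simp add: inner_add_right)
    with NiVj1 show False by simp
  qed
  define t where "t = N i \<bullet> V (j+1)"
  have cc: "N i \<times> N j = t *\<^sub>R V j"
    using cross_cross2[of "V i" "V (i+1)" "V j" "V (j+1)"] NiVj unfolding N_def t_def by simp
  have t1: "\<bar>t\<bar> \<ge> 1" unfolding t_def
    by (rule Ints_nonzero_abs_ge1[OF intv_inner[OF intvN intvV] NiVj1])
  have "Xseq \<xi> \<eta> j \<le> \<bar>V j $ 1\<bar>" using V1[of j] fstx[of j] j by simp
  also have "\<dots> \<le> norm (V j)" by (rule component_le_norm_cart)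
  also have "\<dots> \<le> \<bar>t\<bar> * norm (V j)" using t1 by (simp add: mult_le_cancel_right1)
  also have "\<dots> = norm (N i \<times> N j)" unfolding cc by simp
  also have "\<dots> \<le> norm (N i) * norm (N j)" by (rule norm_cross_le)
  also have "\<dots> = Hgt (x i) (x (i+1)) * Hgt (x j) (x (j+1))" unfolding Hgt_def N_def V_def by simp
  finally show ?thesis using part_a by simp
qed

lemma part1: "infinite {i. i \<ge> 2 \<and> qlin_indep3 (x (i - 1)) (x i) (x (i + 1))}"
  (is "infinite ?I")
proof
  assume fin: "finite ?I"
  define M where "M = Max (insert 2 ?I)"
  have M2: "M \<ge> 2" unfolding M_def using fin by simp
  have gapM: "\<forall>k. M < k \<and> k < j \<longrightarrow> \<not> qlin_indep3 (x (k - 1)) (x k) (x (k + 1))" for j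
  proof (intro allI impI)
    fix k assume k: "M < k \<and> k < j"
    show "\<not> qlin_indep3 (x (k - 1)) (x k) (x (k + 1))"
    proof
      assume "qlin_indep3 (x (k - 1)) (x k) (x (k + 1))"
      hence "k \<in> ?I" using k M2 by simp
      hence "k \<le> M" unfolding M_def using fin by simp
      with k show False by simp
    qed
  qed
  have orth: "N M \<bullet> V m = 0" if m: "m \<ge> M + 1" for m
  proof -
    obtain r where r: "r \<noteq> 0" "N (M + (m - 1 - M)) = r *\<^sub>R N M"
      using chain[OF M2 gapM[of m], of "m - 1 - M"] m by auto
    have mm: "M + (m - 1 - M) = m - 1" "m - 1 + 1 = m" using m by auto
    have "N (m-1) \<bullet> V m = 0" using N_dot_next(1)[of "m-1"] unfolding mm .
    thus ?thesis using r unfolding mm by simp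
  qed
  define n where "n = N M"
  have nz: "n \<noteq> 0" unfolding n_def using N_nz[of M] M2 by simp
  have nint: "n $ 1 \<in> \<int>" "n $ 2 \<in> \<int>" "n $ 3 \<in> \<int>" using intvN[of M] unfolding n_def intv_def by auto
  obtain qa qb qc where q: "n $ 1 = of_rat qa" "n $ 2 = of_rat qb" "n $ 3 = of_rat qc"
    using Ints_rat[OF nint(1)] Ints_rat[OF nint(2)] Ints_rat[OF nint(3)] by blast
  define L where "L = n $ 1 + n $ 2 * \<xi> + n $ 3 * \<eta>"
  have L0: "L \<noteq> 0"
  proof
    assume "L = 0"
    hence "qa = 0 \<and> qb = 0 \<and> qc = 0" using indep unfolding L_def q by blast
    hence "n = 0" using q by (simp add: vec_eq_iff forall_3)
    with nz show False by simp
  qed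
  define C where "C = (\<bar>n $ 2\<bar> + \<bar>n $ 3\<bar>) * Delta \<xi> \<eta> 1"
  define m where "m = M + 2 + nat \<lceil>C / \<bar>L\<bar>\<rceil>"
  have m1: "m \<ge> M + 1" "m \<ge> 1" unfolding m_def by auto
  obtain a b c where xm: "x m = (a,b,c)" by (cases "x m")
  have Vm: "V m $ 1 = of_int a" "V m $ 2 = of_int b" "V m $ 3 = of_int c"
    unfolding V_def xm by (simp_all add: to_real3_comp)
  have aX: "real_of_int a = Xseq \<xi> \<eta> m" using fstx[OF m1(2)] xm by simp
  have Xm1: "Xseq \<xi> \<eta> m \<ge> 1" by (rule X_ge1[OF m1(2)])
  have "n \<bullet> V m = 0" using orth[OF m1(1)] unfolding n_def .
  hence lin: "n $ 1 * of_int a + n $ 2 * of_int b + n $ 3 * of_int c = 0"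
    by (simp add: inner_vec_def sum_3 Vm)
  have aL: "of_int a * L = n $ 2 * (of_int a * \<xi> - of_int b) + n $ 3 * (of_int a * \<eta> - of_int c)"
    unfolding L_def using lin by (simp add: algebra_simps)
  have d1: "\<bar>real_of_int a * \<xi> - real_of_int b\<bar> \<le> Delta \<xi> \<eta> (Xseq \<xi> \<eta> m)"
    using delta_ge1[where \<xi>=\<xi> and \<eta>=\<eta> and a=a and b=b and c=c] dx[OF m1(2)] xm by simp
  have d2: "\<bar>real_of_int a * \<eta> - real_of_int c\<bar> \<le> Delta \<xi> \<eta> (Xseq \<xi> \<eta> m)"
    using delta_ge2[where \<xi>=\<xi> and \<eta>=\<eta> and a=a and b=b and c=c] dx[OF m1(2)] xm by simp
  have D1: "Delta \<xi> \<eta> (Xseq \<xi> \<eta> m) \<le> Delta \<xi> \<eta> 1" using Xm1 by (intro Delta_mono) auto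
  have "\<bar>of_int a * L\<bar> \<le> \<bar>n $ 2\<bar> * \<bar>of_int a * \<xi> - of_int b\<bar> + \<bar>n $ 3\<bar> * \<bar>of_int a * \<eta> - of_int c\<bar>"
    unfolding aL by (metis abs_mult abs_triangle_ineq)
  also have "\<dots> \<le> \<bar>n $ 2\<bar> * Delta \<xi> \<eta> 1 + \<bar>n $ 3\<bar> * Delta \<xi> \<eta> 1"
    using d1 d2 D1 by (intro add_mono mult_left_mono) auto
  also have "\<dots> = C" unfolding C_def by (simp add: algebra_simps)
  finally have le: "real_of_int a * \<bar>L\<bar> \<le> C" using aX Xm1 by (simp add: abs_mult)
  have "real_of_int a \<ge> real (m - 1)" using aX X_big[OF m1(2)] by simp
  moreover have "real (m - 1) > C / \<bar>L\<bar>" unfolding m_def by linarith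
  ultimately have "real_of_int a > C / \<bar>L\<bar>" by linarith
  hence "real_of_int a * \<bar>L\<bar> > C" using L0 by (simp add: field_simps)
  with le show False by simp
qed

end

theorem lemma3p2:
  fixes \<xi> \<eta> :: real and f :: "rat poly poly" and x :: "nat \<Rightarrow> int \<times> int \<times> int"
  assumes indep: "\<forall>a b c :: rat. of_rat a + of_rat b * \<xi> + of_rat c * \<eta> = 0
                     \<longrightarrow> a = 0 \<and> b = 0 \<and> c = 0"
    and irr: "irreducible f" and deg: "total_degree f = 2"
    and notQx: "f \<notin> range (\<lambda>p. [:p:])"
    and root: "eval2 f \<xi> \<eta> = 0"
    and approx: "\<exists>lam::real. lam > 1/2 \<and> (\<forall>\<^sub>F X in at_top. X \<ge> 1 \<longrightarrow>
        (\<exists>x0 x1 x2 :: int. (x0, x1, x2) \<noteq> (0, 0, 0) \<and> \<bar>real_of_int x0\<bar> \<le> X \<and>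
           \<bar>real_of_int x0 * \<xi> - real_of_int x1\<bar> \<le> X powr (-lam) \<and>
           \<bar>real_of_int x0 * \<eta> - real_of_int x2\<bar> \<le> X powr (-lam)))"
    and mp: "minimal_points \<xi> \<eta> x"
  defines "I \<equiv> {i. i \<ge> 2 \<and> qlin_indep3 (x (i - 1)) (x i) (x (i + 1))}"
  shows "infinite I \<and>
    (\<forall>i j. i \<in> I \<longrightarrow> j \<in> I \<longrightarrow> i < j \<longrightarrow> (\<forall>k\<in>I. \<not> (i < k \<and> k < j)) \<longrightarrow>
       qspan2 (x i) (x (i + 1)) \<noteq> qspan2 (x j) (x (j + 1)) \<and>
       Xseq \<xi> \<eta> j \<le> Hgt (x i) (x (i + 1)) * Hgt (x j) (x (j + 1)))"
  proof -
  have inf: "infinite I" unfolding I_def by (rule part1[OF indep approx mp])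
  have "\<forall>i j. i \<in> I \<longrightarrow> j \<in> I \<longrightarrow> i < j \<longrightarrow> (\<forall>k\<in>I. \<not> (i < k \<and> k < j)) \<longrightarrow>
       qspan2 (x i) (x (i + 1)) \<noteq> qspan2 (x j) (x (j + 1)) \<and>
       Xseq \<xi> \<eta> j \<le> Hgt (x i) (x (i + 1)) * Hgt (x j) (x (j + 1))"
  proof (intro allI impI)
    fix i j assume iI: "i \<in> I" and jI: "j \<in> I" and ij: "i < j" and gap: "\<forall>k\<in>I. \<not> (i < k \<and> k < j)"
    have i2: "i \<ge> 2" using iI unfolding I_def by simp
    have Ij: "qlin_indep3 (x (j - 1)) (x j) (x (j + 1))" using jI unfolding I_def by simp
    have gap': "\<forall>k. i < k \<and> k < j \<longrightarrow> \<not> qlin_indep3 (x (k - 1)) (x k) (x (k + 1))"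
    proof (intro allI impI notI)
      fix k assume k: "i < k \<and> k < j" and q: "qlin_indep3 (x (k - 1)) (x k) (x (k + 1))"
      have "k \<in> I" unfolding I_def using k i2 q by simp
      with gap k show False by blast
    qed
    show "qspan2 (x i) (x (i + 1)) \<noteq> qspan2 (x j) (x (j + 1)) \<and>
       Xseq \<xi> \<eta> j \<le> Hgt (x i) (x (i + 1)) * Hgt (x j) (x (j + 1))"
      by (rule part2[OF indep approx mp i2 Ij ij gap'])
  qed
  with inf show ?thesis by blast
qed

end
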